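(* Let $F$ be a DQCNF and let $\varphi$ be an autarky of $F$. Then $\varphi * F$ is satisfiable if and only if $F$ is satisfiable.
   Context: A DQCNF $F$ consists of a finite set $X$ of universal variables, a finite set $Y$ of existential variables (disjoint from $X$), for each $y \in Y$ a dependency set $D(y) \subseteq X$, and a matrix which is a CNF, i.e. a finite set of clauses (finite disjunctions of literals) over the variables $X \cup Y$. $F$ is satisfiable if there are, for each $y \in Y$, boolean functions $f_y$ depending only on the variables in $D(y)$ such that, after substituting $f_y$ for $y$ (and $\neg f_y$ for $\overline{y}$) everywhere, every clause becomes a tautology, i.e. evaluates to true under every assignment of the universal variables. An autarky $\varphi$ of $F$ is a partial assignment that assigns to some set $\mathrm{var}(\varphi) \subseteq Y$ of existential variables boolean functions $\varphi(y)$ depending only on the variables in $D(y)$, such that every clause of $F$ containing a literal whose variable lies in $\mathrm{var}(\varphi)$ becomes a tautology after substituting $\varphi(y)$ for each $y \in \mathrm{var}(\varphi)$, i.e. evaluates to true under every assignment to all universal variables and all existential variables not in $\mathrm{var}(\varphi)$. The DQCNF $\varphi * F$ has the same variables and dependency sets as $F$, and its matrix is obtained from that of $F$ by removing all clauses containing a literal whose variable lies in $\mathrm{var}(\varphi)$ (these are exactly the clauses satisfied by $\varphi$). *)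

theory Defs
  imports Main
begin

datatype 'v lit = Pos 'v | Neg 'v

fun lit_var :: "'v lit \<Rightarrow> 'v" where
  "lit_var (Pos v) = v" | "lit_var (Neg v) = v"

fun lit_val :: "('v \<Rightarrow> bool) \<Rightarrow> 'v lit \<Rightarrow> bool" where
  "lit_val \<sigma> (Pos v) = \<sigma> v" | "lit_val \<sigma> (Neg v) = (\<not> \<sigma> v)"

type_synonym 'v clause = "'v lit set"

record 'v dqcnf =
  univ :: "'v set"
  exist :: "'v set"
  dep :: "'v \<Rightarrow> 'v set"
  matrix :: "'v clause set"

definition wf_dqcnf :: "'v dqcnf \<Rightarrow> bool" where
  "wf_dqcnf F \<longleftrightarrow> finite (univ F) \<and> finite (exist F) \<and> univ F \<inter> exist F = {}
     \<and> (\<forall>y\<in>exist F. dep F y \<subseteq> univ F)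
     \<and> finite (matrix F) \<and> (\<forall>C\<in>matrix F. finite C \<and> lit_var ` C \<subseteq> univ F \<union> exist F)"

definition depends_only :: "'v set \<Rightarrow> (('v \<Rightarrow> bool) \<Rightarrow> bool) \<Rightarrow> bool" where
  "depends_only S g \<longleftrightarrow> (\<forall>a b. (\<forall>x\<in>S. a x = b x) \<longrightarrow> g a = g b)"

definition satisfiable :: "'v dqcnf \<Rightarrow> bool" where
  "satisfiable F \<longleftrightarrow> (\<exists>f :: 'v \<Rightarrow> ('v \<Rightarrow> bool) \<Rightarrow> bool.
     (\<forall>y\<in>exist F. depends_only (dep F y) (f y)) \<and>
     (\<forall>C\<in>matrix F. \<forall>a. \<exists>l\<in>C. lit_val (\<lambda>v. if v \<in> exist F then f v a else a v) l))"

type_synonym 'v passign = "'v \<Rightarrow> (('v \<Rightarrow> bool) \<Rightarrow> bool) option"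

definition apply_passign :: "'v passign \<Rightarrow> ('v \<Rightarrow> bool) \<Rightarrow> 'v \<Rightarrow> bool" where
  "apply_passign \<phi> a v = (case \<phi> v of Some g \<Rightarrow> g a | None \<Rightarrow> a v)"

definition autarky :: "'v passign \<Rightarrow> 'v dqcnf \<Rightarrow> bool" where
  "autarky \<phi> F \<longleftrightarrow> dom \<phi> \<subseteq> exist F
     \<and> (\<forall>y g. \<phi> y = Some g \<longrightarrow> depends_only (dep F y) g)
     \<and> (\<forall>C\<in>matrix F. (\<exists>l\<in>C. lit_var l \<in> dom \<phi>) \<longrightarrow>
          (\<forall>a. \<exists>l\<in>C. lit_val (apply_passign \<phi> a) l))"

definition apply_autarky :: "'v passign \<Rightarrow> 'v dqcnf \<Rightarrow> 'v dqcnf" where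
  "apply_autarky \<phi> F = F\<lparr>matrix := {C \<in> matrix F. \<forall>l\<in>C. lit_var l \<notin> dom \<phi>}\<rparr>"

end

theory Submission
  imports Defs
begin

lemma lit_val_cong: "\<sigma> (lit_var l) = \<tau> (lit_var l) \<Longrightarrow> lit_val \<sigma> l = lit_val \<tau> l"
  by (cases l) auto

theorem lemma1:
  fixes F :: "'v dqcnf" and \<phi> :: "'v passign"
  assumes "wf_dqcnf F" and "autarky \<phi> F"
  shows "satisfiable (apply_autarky \<phi> F) \<longleftrightarrow> satisfiable F"
proof
  assume "satisfiable F"
  then show "satisfiable (apply_autarky \<phi> F)"
  proof -
    from \<open>satisfiable F\<close> obtain f where f1: "\<forall>y\<in>exist F. depends_only (dep F y) (f y)"
      and f2: "\<forall>C\<in>matrix F. \<forall>a. \<exists>l\<in>C. lit_val (\<lambda>v. if v \<in> exist F then f v a else a v) l"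
      unfolding satisfiable_def by blast
    have m: "matrix (apply_autarky \<phi> F) \<subseteq> matrix F" "exist (apply_autarky \<phi> F) = exist F"
      "dep (apply_autarky \<phi> F) = dep F"
      unfolding apply_autarky_def by auto
    show ?thesis unfolding satisfiable_def m(2,3)
    proof (rule exI[of _ f], intro conjI ballI)
      show "\<And>y. y \<in> exist F \<Longrightarrow> depends_only (dep F y) (f y)" using f1 by blast
      fix C assume "C \<in> matrix (apply_autarky \<phi> F)"
      then have "C \<in> matrix F" using m(1) by blast
      then show "\<forall>a. \<exists>l\<in>C. lit_val (\<lambda>v. if v \<in> exist F then f v a else a v) l" using f2 by blast
    qed
  qed
next
  assume "satisfiable (apply_autarky \<phi> F)"
  then obtain f where fd: "\<forall>y\<in>exist F. depends_only (dep F y) (f y)"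
    and fc: "\<forall>C\<in>{C \<in> matrix F. \<forall>l\<in>C. lit_var l \<notin> dom \<phi>}. \<forall>a. \<exists>l\<in>C.
        lit_val (\<lambda>v. if v \<in> exist F then f v a else a v) l"
    unfolding satisfiable_def apply_autarky_def by auto
  have dom: "dom \<phi> \<subseteq> exist F"
    and gd: "\<And>y g. \<phi> y = Some g \<Longrightarrow> depends_only (dep F y) g"
    and ac: "\<And>C a. C \<in> matrix F \<Longrightarrow> \<exists>l\<in>C. lit_var l \<in> dom \<phi> \<Longrightarrow>
          \<exists>l\<in>C. lit_val (apply_passign \<phi> a) l"
    using assms(2) unfolding autarky_def by (blast, blast, blast)
  have wf: "univ F \<inter> exist F = {}" "\<And>y. y \<in> exist F \<Longrightarrow> dep F y \<subseteq> univ F"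
    using assms(1) unfolding wf_dqcnf_def by blast+
  define f' where "f' y = (case \<phi> y of Some g \<Rightarrow> g | None \<Rightarrow> f y)" for y
  show "satisfiable F"
    unfolding satisfiable_def
  proof (rule exI[of _ f'], intro conjI ballI allI)
    fix y assume "y \<in> exist F"
    then show "depends_only (dep F y) (f' y)"
      using fd gd unfolding f'_def by (cases "\<phi> y") auto
  next
    fix C a assume C: "C \<in> matrix F"
    let ?s = "\<lambda>v. if v \<in> exist F then f' v a else a v"
    show "\<exists>l\<in>C. lit_val ?s l"
    proof (cases "\<exists>l\<in>C. lit_var l \<in> dom \<phi>")
      case True
      define a' where "a' v = (if v \<in> exist F \<and> v \<notin> dom \<phi> then f v a else a v)" for v
      have "apply_passign \<phi> a' v = ?s v" for v
      proof (cases "\<phi> v")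
        case None
        then show ?thesis unfolding apply_passign_def a'_def f'_def by auto
      next
        case (Some g)
        then have vE: "v \<in> exist F" using dom by auto
        have ag: "\<forall>x\<in>dep F v. a' x = a x"
        proof
          fix x assume "x \<in> dep F v"
          then have "x \<notin> exist F" using wf vE by blast
          then show "a' x = a x" unfolding a'_def by simp
        qed
        have "g a' = g a"
          using gd[OF Some] ag unfolding depends_only_def by blast
        then show ?thesis using Some vE unfolding apply_passign_def f'_def by auto
      qed
      then have "apply_passign \<phi> a' = ?s" by auto
      then show ?thesis using ac[OF C True, of a'] by simp
    next
      case False
      then obtain l where l: "l \<in> C" "lit_val (\<lambda>v. if v \<in> exist F then f v a else a v) l"
        using fc C by blast
      have "lit_var l \<notin> dom \<phi>" using False l by blast
      then have "lit_val ?s l = lit_val (\<lambda>v. if v \<in> exist F then f v a else a v) l"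
        by (intro lit_val_cong) (auto simp: f'_def)
      then show ?thesis using l by blast
    qed
  qed
qed

end
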